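(* The polynomials $P_n$ satisfy $P_0(y)=y-1$ and, for $n\ge1$, \[ P_n=nP_{n-1}-P'_{n-1}+\frac{1}{n}\sum_{k=1}^{n-1}k\bigl\{(k-1)P_{k-1}-P_k-P'_{k-1}\bigr\}P_{n-k-1}. \]
   Context: Let $A$ be the ring of formal series $a=\sum_{n=0}^\infty \frac{q_n(y)}{x^n}$, each $q_n$ a complex polynomial of degree at most $n$, with the obvious ring operations and the $x^{-1}$-adic topology. Formal derivatives: $a_x=-\sum_{n\ge1}\frac{n q_n(y)}{x^{n+1}}$, $a_y=\sum_{n\ge1}\frac{q_n'(y)}{x^n}$. For $1+u\in A$ with $u$ having zero constant term, $\log(1+u)=\sum_{k\ge1}(-1)^{k+1}u^k/k$. Let $V$ be the unique solution in $A$ of $V=1+\frac{y}{x}-\frac{1}{x}V-V_x-\frac{1}{x}V_y+\frac{1}{x}\log V$, and define polynomials $P_{n-1}$ ($n\ge1$) by $V=1+\sum_{n=1}^\infty\frac{P_{n-1}(y)}{x^n}$. Primes denote derivatives in $y$. *)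

theory Defs
  imports "HOL-Computational_Algebra.Polynomial"
begin

text \<open>An element a = sum_n q_n(y) / x^n of the ring A is represented by its
coefficient sequence q :: nat => complex poly, with degree (q n) <= n.\<close>

type_synonym ser = "nat \<Rightarrow> complex poly"

definition inA :: "ser \<Rightarrow> bool" where
  "inA a \<longleftrightarrow> (\<forall>n. degree (a n) \<le> n)"

definition sconst :: "complex poly \<Rightarrow> ser" where
  "sconst c = (\<lambda>n. if n = 0 then c else 0)"

definition sadd :: "ser \<Rightarrow> ser \<Rightarrow> ser" where
  "sadd a b = (\<lambda>n. a n + b n)"

definition ssub :: "ser \<Rightarrow> ser \<Rightarrow> ser" where
  "ssub a b = (\<lambda>n. a n - b n)"

definition smul :: "ser \<Rightarrow> ser \<Rightarrow> ser" where
  "smul a b = (\<lambda>n. \<Sum>i\<le>n. a i * b (n - i))"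

fun spow :: "ser \<Rightarrow> nat \<Rightarrow> ser" where
  "spow a 0 = sconst 1"
| "spow a (Suc k) = smul a (spow a k)"

definition sdivx :: "ser \<Rightarrow> ser" where
  "sdivx a = (\<lambda>n. if n = 0 then 0 else a (n - 1))"

text \<open>Formal derivative in x: a_x = - sum_{n>=1} n q_n / x^(n+1).\<close>
definition sdx :: "ser \<Rightarrow> ser" where
  "sdx a = (\<lambda>m. if m = 0 then 0 else - smult (of_nat (m - 1)) (a (m - 1)))"

definition sdy :: "ser \<Rightarrow> ser" where
  "sdy a = (\<lambda>n. pderiv (a n))"

text \<open>The series converges x^{-1}-adically; since u^k has no terms of x-order below k,
the coefficient of x^{-n} is the finite sum over 1 <= k <= n.\<close>
definition slog1p :: "ser \<Rightarrow> ser" where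
  "slog1p u = (\<lambda>n. \<Sum>k\<in>{1..n}. smult ((-1) ^ (k + 1) / of_nat k) (spow u k n))"

text \<open>log of an element 1 + u (constant term 1).\<close>
definition slog :: "ser \<Rightarrow> ser" where
  "slog a = slog1p (\<lambda>n. if n = 0 then 0 else a n)"

text \<open>The defining equation V = 1 + y/x - V/x - V_x - V_y/x + (log V)/x,
with V in A having constant term 1 (so that log V is defined).\<close>
definition Veq :: "ser \<Rightarrow> bool" where
  "Veq v \<longleftrightarrow> inA v \<and> v 0 = 1 \<and>
     v = sadd (ssub (ssub (ssub (sadd (sconst 1) (sdivx (sconst [:0, 1:])))
                                (sdivx v)) (sdx v)) (sdivx (sdy v))) (sdivx (slog v))"

definition V :: ser where
  "V = (THE v. Veq v)"

text \<open>V = 1 + sum_{n>=1} P_{n-1}(y) / x^n.\<close>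
definition P :: "nat \<Rightarrow> complex poly" where
  "P n = V (Suc n)"

end

theory Submission
  imports Defs "HOL-Computational_Algebra.Formal_Power_Series"
begin
unbundle fps_syntax

lemma smul_fps: "smul a b = fps_nth (Abs_fps a * Abs_fps b)"
  by (auto simp: smul_def fps_mult_nth atLeast0AtMost)

lemma spow_fps: "spow a k = fps_nth (Abs_fps a ^ k)"
proof (induction k)
  case 0
  then show ?case by (auto simp: sconst_def)
next
  case (Suc k)
  then show ?case by (simp add: smul_fps fps_nth_inverse)
qed

lemma pow_low: fixes f :: "'a::comm_semiring_1 fps"
  assumes "f $ 0 = 0" shows "m < k \<Longrightarrow> (f ^ k) $ m = 0"
proof (induction k arbitrary: m)
  case 0 then show ?case by simp
next
  case (Suc k)
  have "(f ^ Suc k) $ m = (\<Sum>i=0..m. f$i * (f^k)$(m - i))" by (simp add: fps_mult_nth)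
  also have "\<dots> = 0"
  proof (rule sum.neutral, intro ballI)
    fix i assume "i \<in> {0..m}"
    show "f$i * (f^k)$(m - i) = 0"
    proof (cases "i = 0")
      case True then show ?thesis using assms by simp
    next
      case False then show ?thesis using Suc.IH[of "m-i"] Suc.prems \<open>i\<in>{0..m}\<close> by simp
    qed
  qed
  finally show ?case .
qed

definition cc :: "nat \<Rightarrow> complex" where "cc k = (-1) ^ (k + 1) / of_nat k"

definition LN :: "complex poly fps \<Rightarrow> nat \<Rightarrow> complex poly fps" where
  "LN U N = (\<Sum>k\<in>{1..N}. fps_const [:cc k:] * U ^ k)"

lemma LN_nth:
  assumes "u 0 = 0" "m \<le> N"
  shows "LN (Abs_fps u) N $ m = slog1p u m"
proof -
  have "LN (Abs_fps u) N $ m = (\<Sum>k\<in>{1..N}. smult (cc k) ((Abs_fps u ^ k) $ m))"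
    by (simp add: LN_def fps_sum_nth)
  also have "\<dots> = (\<Sum>k\<in>{1..m}. smult (cc k) ((Abs_fps u ^ k) $ m))"
    apply (rule sum.mono_neutral_right)
    using assms pow_low[of "Abs_fps u" m] by auto
  finally show ?thesis by (simp add: slog1p_def spow_fps cc_def)
qed

lemma cc_k: "k \<ge> 1 \<Longrightarrow> fps_const [:cc k:] * of_nat k = ((-1) ^ (k - 1) :: complex poly fps)"
proof -
  assume k: "k \<ge> 1"
  have "cc k * of_nat k = (-1) ^ (k - 1)"
  proof -
    have "of_nat k \<noteq> (0::complex)" using k by simp
    moreover have "(-1::complex) ^ (k + 1) = (-1) ^ (k - 1)" using k
      by (cases k) auto
    ultimately show ?thesis by (simp add: cc_def)
  qed
  then have "[:cc k:] * of_nat k = [:(-1) ^ (k - 1):]"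
    by (simp add: of_nat_poly mult.commute)
  also have "\<dots> = ((-1) ^ (k - 1) :: complex poly)"
  proof -
    have "[:-1:] = (-1 :: complex poly)" by (metis minus_pCons minus_zero one_pCons)
    then show ?thesis by (metis poly_const_pow)
  qed
  finally have "[:cc k:] * of_nat k = ((-1) ^ (k - 1) :: complex poly)" .
  then show ?thesis
    by (metis (no_types) fps_const_mult fps_of_nat fps_const_neg fps_const_power fps_const_1_eq_1)
qed

lemma deriv_LN:
  "fps_deriv (LN U N) = fps_deriv U * (\<Sum>j<N. (-U) ^ j)"
proof -
  have "fps_deriv (LN U N) = (\<Sum>k\<in>{1..N}. fps_const [:cc k:] * (of_nat k * fps_deriv U * U ^ (k - 1)))"
    by (simp add: LN_def fps_deriv_sum fps_deriv_power')
  also have "\<dots> = (\<Sum>k\<in>{1..N}. fps_deriv U * (-U) ^ (k - 1))"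
  proof (rule sum.cong[OF refl])
    fix k assume "k \<in> {1..N}"
    then have "fps_const [:cc k:] * of_nat k = ((-1) ^ (k - 1) :: complex poly fps)" by (intro cc_k) auto
    then show "fps_const [:cc k:] * (of_nat k * fps_deriv U * U ^ (k - 1)) = fps_deriv U * (-U) ^ (k - 1)"
      by (metis (no_types, lifting) mult.assoc mult.commute power_minus)
  qed
  also have "\<dots> = fps_deriv U * (\<Sum>j<N. (-U) ^ j)"
    unfolding sum_distrib_left[symmetric]
    by (rule arg_cong[where f="(*) _"], rule sum.reindex_bij_witness[where i="\<lambda>j. j + 1" and j="\<lambda>k. k - 1"]) auto
  finally show ?thesis .
qed

lemma key_fps:
  "(1 + U) * (fps_X * fps_deriv (LN U N)) = fps_X * fps_deriv U * (1 - (-U) ^ N)"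
proof -
  have "(1 + U) * (\<Sum>j<N. (-U) ^ j) = 1 - (-U) ^ N"
    using one_diff_power_eq[of "-U" N] by simp
  then show ?thesis by (simp add: deriv_LN)
qed


lemma Xd_nth: "(fps_X * fps_deriv f) $ n = of_nat n * f $ n"
  by (simp add: fps_mult_fps_X_deriv_shift)

lemma log_id:
  assumes u0: "u 0 = 0" and n: "n \<ge> 1"
  shows "smult (of_nat n) (slog1p u n) = smult (of_nat n) (u n)
          - (\<Sum>k\<in>{1..n-1}. smult (of_nat k) (slog1p u k) * u (n - k))"
proof -
  define U where "U = Abs_fps u"
  define L where "L = LN U n"
  have U0: "U $ 0 = 0" using u0 by (simp add: U_def)
  have Ln: "\<And>m. m \<le> n \<Longrightarrow> L $ m = slog1p u m" unfolding L_def U_def by (rule LN_nth[of u, OF u0])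
  have eq: "((1 + U) * (fps_X * fps_deriv L)) $ n = (fps_X * fps_deriv U * (1 - (-U) ^ n)) $ n"
    unfolding L_def by (simp only: key_fps)
  have r0: "(fps_X * fps_deriv U * (-U) ^ n) $ n = 0"
    unfolding fps_mult_nth[of _ "(-U)^n"]
  proof (rule sum.neutral, intro ballI)
    fix i assume i: "i \<in> {0..n}"
    show "(fps_X * fps_deriv U) $ i * ((-U) ^ n) $ (n - i) = 0"
    proof (cases "i = 0")
      case True then show ?thesis by (simp add: Xd_nth)
    next
      case False
      have "((-U) ^ n) $ (n - i) = 0" by (rule pow_low) (use U0 False i in auto)
      then show ?thesis by simp
    qed
  qed
  have rhs: "(fps_X * fps_deriv U * (1 - (-U) ^ n)) $ n = of_nat n * u n"
    using r0 by (simp add: right_diff_distrib Xd_nth U_def)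
  have lhs1: "((1 + U) * (fps_X * fps_deriv L)) $ n
      = of_nat n * slog1p u n + (U * (fps_X * fps_deriv L)) $ n"
    by (simp add: distrib_right Xd_nth Ln)
  have "(U * (fps_X * fps_deriv L)) $ n = (\<Sum>i=0..n. u i * (of_nat (n - i) * slog1p u (n - i)))"
    unfolding fps_mult_nth[of U] Xd_nth by (intro sum.cong refl) (simp add: Ln U_def)
  also have "\<dots> = (\<Sum>i\<in>{1..n-1}. u i * (of_nat (n - i) * slog1p u (n - i)))"
  proof -
    have Z: "\<forall>i\<in>{0..n} - {1..n-1}. u i * (of_nat (n - i) * slog1p u (n - i)) = 0"
    proof
      fix i assume "i \<in> {0..n} - {1..n-1}"
      then have "i = 0 \<or> i = n" by auto
      then show "u i * (of_nat (n - i) * slog1p u (n - i)) = 0" using u0 by auto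
    qed
    show ?thesis by (rule sum.mono_neutral_right[OF _ _ Z]) auto
  qed
  also have "\<dots> = (\<Sum>k\<in>{1..n-1}. smult (of_nat k) (slog1p u k) * u (n - k))"
    by (rule sum.reindex_bij_witness[where i="\<lambda>k. n - k" and j="\<lambda>i. n - i"])
       (auto simp: of_nat_poly mult.commute)
  finally have lhs2: "(U * (fps_X * fps_deriv L)) $ n = (\<Sum>k\<in>{1..n-1}. smult (of_nat k) (slog1p u k) * u (n - k))" .
  from eq lhs1 lhs2 rhs show ?thesis
    by (simp add: of_nat_poly algebra_simps)
qed


lemma smul_loc: "(\<forall>i\<le>n. a i = a' i) \<Longrightarrow> (\<forall>i\<le>n. b i = b' i) \<Longrightarrow> smul a b n = smul a' b' n"
  unfolding smul_def by (intro sum.cong) auto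

lemma spow_loc: "(\<forall>i\<le>n. a i = b i) \<Longrightarrow> m \<le> n \<Longrightarrow> spow a k m = spow b k m"
proof (induction k arbitrary: m)
  case 0 then show ?case by simp
next
  case (Suc k)
  show ?case using Suc by (simp, intro smul_loc) auto
qed

lemma slog_loc: "(\<forall>i\<le>n. a i = b i) \<Longrightarrow> slog a n = slog b n"
  unfolding slog_def slog1p_def
  by (intro sum.cong refl arg_cong[where f="smult _"] spow_loc[where n=n]) auto

lemma smul_deg: "(\<forall>i\<le>n. degree (a i) \<le> i) \<Longrightarrow> (\<forall>i\<le>n. degree (b i) \<le> i) \<Longrightarrow> degree (smul a b n) \<le> n"
  unfolding smul_def
proof (intro degree_sum_le)
  fix i assume a: "\<forall>i\<le>n. degree (a i) \<le> i" and b: "\<forall>i\<le>n. degree (b i) \<le> i" and i: "i \<in> {..n}"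
  have "degree (a i * b (n - i)) \<le> degree (a i) + degree (b (n - i))" by (rule degree_mult_le)
  also have "\<dots> \<le> i + (n - i)" using a b i by (intro add_mono) auto
  finally show "degree (a i * b (n - i)) \<le> n" using i by auto
qed auto

lemma spow_deg: "(\<forall>i\<le>n. degree (a i) \<le> i) \<Longrightarrow> m \<le> n \<Longrightarrow> degree (spow a k m) \<le> m"
proof (induction k arbitrary: m)
  case 0 then show ?case by (simp add: sconst_def)
next
  case (Suc k)
  show ?case using Suc by (simp, intro smul_deg) auto
qed

lemma slog_deg: "(\<forall>i\<le>n. degree (a i) \<le> i) \<Longrightarrow> degree (slog a n) \<le> n"
  unfolding slog_def slog1p_def
proof (intro degree_sum_le)
  fix k assume a: "\<forall>i\<le>n. degree (a i) \<le> i"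
  have "degree (spow (\<lambda>n. if n = 0 then 0 else a n) k n) \<le> n"
    by (rule spow_deg[where n=n]) (use a in auto)
  then show "degree (smult ((- 1) ^ (k + 1) / of_nat k) (spow (\<lambda>n. if n = 0 then 0 else a n) k n)) \<le> n"
    using degree_smult_le order_trans by blast
qed auto

definition nxt :: "ser \<Rightarrow> nat \<Rightarrow> complex poly" where
  "nxt v n = (if n = 0 then [:0,1:] else 0) - v n + smult (of_nat n) (v n) - pderiv (v n) + slog v n"

lemma nxt_loc: "(\<forall>i\<le>n. a i = b i) \<Longrightarrow> nxt a n = nxt b n"
  unfolding nxt_def using slog_loc[of n a b] by simp

lemma nxt_deg: "(\<forall>i\<le>n. degree (a i) \<le> i) \<Longrightarrow> degree (nxt a n) \<le> Suc n"
proof -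
  assume a: "\<forall>i\<le>n. degree (a i) \<le> i"
  have an: "degree (a n) \<le> Suc n" using a by auto
  have "degree (if n = 0 then [:0,1:] else 0 :: complex poly) \<le> Suc n" by simp
  moreover have "degree (smult (of_nat n) (a n)) \<le> Suc n" using an degree_smult_le order_trans by blast
  moreover have "degree (pderiv (a n)) \<le> Suc n" using an by (simp add: degree_pderiv)
  moreover have "degree (slog a n) \<le> Suc n" using slog_deg[OF a] by simp
  ultimately show ?thesis unfolding nxt_def using an
    by (intro degree_add_le degree_diff_le) auto
qed

definition R :: "ser \<Rightarrow> ser" where
  "R v = sadd (ssub (ssub (ssub (sadd (sconst 1) (sdivx (sconst [:0, 1:])))
                                (sdivx v)) (sdx v)) (sdivx (sdy v))) (sdivx (slog v))"

lemma R_0: "R v 0 = 1"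
  by (simp add: R_def sadd_def ssub_def sconst_def sdivx_def sdx_def)

lemma R_Suc: "R v (Suc n) = nxt v n"
  by (simp add: R_def sadd_def ssub_def sconst_def sdivx_def sdx_def sdy_def nxt_def)

lemma Veq_iff: "Veq v \<longleftrightarrow> inA v \<and> v 0 = 1 \<and> (\<forall>n. v (Suc n) = nxt v n)"
proof -
  have "v = R v \<longleftrightarrow> v 0 = 1 \<and> (\<forall>n. v (Suc n) = nxt v n)"
  proof
    assume "v = R v"
    then show "v 0 = 1 \<and> (\<forall>n. v (Suc n) = nxt v n)" by (metis R_0 R_Suc)
  next
    assume h: "v 0 = 1 \<and> (\<forall>n. v (Suc n) = nxt v n)"
    show "v = R v"
    proof
      fix m show "v m = R v m" using h by (cases m) (simp_all add: R_0 R_Suc)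
    qed
  qed
  then show ?thesis unfolding Veq_def R_def[symmetric] by blast
qed

primrec Wf :: "nat \<Rightarrow> ser" where
  "Wf 0 = (\<lambda>i. if i = 0 then 1 else 0)"
| "Wf (Suc n) = (Wf n)(Suc n := nxt (Wf n) n)"

lemma Wf_stable: "i \<le> n \<Longrightarrow> n \<le> m \<Longrightarrow> Wf m i = Wf n i"
proof (induction m)
  case 0 then show ?case by simp
next
  case (Suc m)
  show ?case
  proof (cases "n = Suc m")
    case True then show ?thesis by simp
  next
    case False
    then have "n \<le> m" using Suc.prems by simp
    then have "Wf m i = Wf n i" using Suc.IH Suc.prems by simp
    moreover have "i \<noteq> Suc m" using \<open>n \<le> m\<close> Suc.prems by simp
    ultimately show ?thesis by simp
  qed
qed

definition W :: ser where "W i = Wf i i"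

lemma Wf_W: "i \<le> n \<Longrightarrow> Wf n i = W i"
  unfolding W_def by (rule Wf_stable[of i i n]) auto

lemma W_rec: "W (Suc n) = nxt W n"
proof -
  have "W (Suc n) = nxt (Wf n) n" unfolding W_def by simp
  also have "\<dots> = nxt W n" by (rule nxt_loc) (auto simp: Wf_W)
  finally show ?thesis .
qed

lemma W_deg: "\<forall>i\<le>n. degree (W i) \<le> i"
proof (induction n)
  case 0 then show ?case by (simp add: W_def)
next
  case (Suc n)
  then show ?case using nxt_deg[OF Suc] by (auto simp: W_rec le_Suc_eq)
qed

lemma Veq_W: "Veq W"
proof -
  have "W 0 = 1" by (simp add: W_def)
  then show ?thesis unfolding Veq_iff inA_def using W_deg W_rec by blast
qed

lemma Veq_uniq: assumes "Veq v" "Veq w" shows "v = w"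
proof -
  have "\<forall>i\<le>n. v i = w i" for n
  proof (induction n)
    case 0 then show ?case using assms by (simp add: Veq_iff)
  next
    case (Suc n)
    have "v (Suc n) = w (Suc n)" using assms nxt_loc[OF Suc] by (simp add: Veq_iff)
    then show ?case using Suc by (auto simp: le_Suc_eq)
  qed
  then show ?thesis by auto
qed

lemma Veq_V: "Veq V"
  unfolding V_def by (rule theI[of Veq W]) (use Veq_W Veq_uniq in auto)


lemma smult_k: "k \<ge> 1 \<Longrightarrow> smult (of_nat k) p = smult (of_nat (k - 1)) p + (p :: complex poly)"
proof -
  assume "k \<ge> 1"
  then have "(of_nat k :: complex) = of_nat (k - 1) + 1" by (simp add: of_nat_diff)
  then show ?thesis by (simp add: smult_add_left)
qed

theorem theorem4p4:
  shows "P 0 = [:-1, 1:] \<and>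
    (\<forall>n\<ge>1. P n = smult (of_nat n) (P (n - 1)) - pderiv (P (n - 1))
       + smult (1 / of_nat n)
           (\<Sum>k\<in>{1..n-1}. smult (of_nat k)
              ((smult (of_nat (k - 1)) (P (k - 1)) - P k - pderiv (P (k - 1))) * P (n - k - 1))))"
proof -
  have VS: "\<And>n. V (Suc n) = nxt V n" and V0: "V 0 = 1" using Veq_V by (auto simp: Veq_iff)
  define u where "u = (\<lambda>i. if i = 0 then 0 else V i)"
  have u0: "u 0 = 0" by (simp add: u_def)
  have sl: "\<And>m. slog V m = slog1p u m" by (simp add: slog_def u_def)
  have PV: "\<And>k. k \<ge> 1 \<Longrightarrow> V k = P (k - 1)" by (simp add: P_def)
  have P0: "P 0 = [:-1, 1:]"
  proof -
    have "P 0 = [:0,1:] - 1" by (simp add: P_def VS nxt_def V0 slog_def slog1p_def)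
    also have "\<dots> = [:-1, 1:]" by (simp add: one_pCons)
    finally show ?thesis .
  qed
  have Pk: "\<And>k. k \<ge> 1 \<Longrightarrow> P k = - P (k - 1) + smult (of_nat k) (P (k - 1)) - pderiv (P (k - 1)) + slog1p u k"
  proof -
    fix k :: nat assume k: "k \<ge> 1"
    have "P k = nxt V k" by (simp add: P_def VS)
    then show "?thesis k" using k by (simp add: nxt_def PV sl)
  qed
  have main: "P n = smult (of_nat n) (P (n - 1)) - pderiv (P (n - 1))
       + smult (1 / of_nat n)
           (\<Sum>k\<in>{1..n-1}. smult (of_nat k)
              ((smult (of_nat (k - 1)) (P (k - 1)) - P k - pderiv (P (k - 1))) * P (n - k - 1)))"
    if n: "n \<ge> 1" for n
  proof -
    have S: "(\<Sum>k\<in>{1..n-1}. smult (of_nat k)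
              ((smult (of_nat (k - 1)) (P (k - 1)) - P k - pderiv (P (k - 1))) * P (n - k - 1)))
          = - (\<Sum>k\<in>{1..n-1}. smult (of_nat k) (slog1p u k) * u (n - k))"
      unfolding sum_negf[symmetric]
    proof (rule sum.cong[OF refl])
      fix k assume k: "k \<in> {1..n-1}"
      then have k1: "k \<ge> 1" by auto
      have nk: "n - k \<ge> 1" using k by auto
      then have uk: "u (n - k) = P (n - k - 1)" by (simp add: u_def PV)
      have "slog1p u k = P k + P (k - 1) - smult (of_nat k) (P (k - 1)) + pderiv (P (k - 1))"
        using Pk[OF k1] by (simp add: algebra_simps)
      then have "smult (of_nat (k - 1)) (P (k - 1)) - P k - pderiv (P (k - 1)) = - slog1p u k"
        using smult_k[OF k1, of "P (k - 1)"] by (simp add: algebra_simps)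
      then show "smult (of_nat k) ((smult (of_nat (k - 1)) (P (k - 1)) - P k - pderiv (P (k - 1))) * P (n - k - 1))
          = - (smult (of_nat k) (slog1p u k) * u (n - k))"
        by (simp add: uk)
    qed
    have un: "u n = P (n - 1)" using n by (simp add: u_def PV)
    have "smult (1 / of_nat n) (- (\<Sum>k\<in>{1..n-1}. smult (of_nat k) (slog1p u k) * u (n - k)))
        = smult (1 / of_nat n) (smult (of_nat n) (slog1p u n) - smult (of_nat n) (u n))"
      unfolding log_id[of u, OF u0 n] by simp
    also have "\<dots> = slog1p u n - u n" using n by (simp add: smult_diff_right)
    finally have T: "smult (1 / of_nat n) (- (\<Sum>k\<in>{1..n-1}. smult (of_nat k) (slog1p u k) * u (n - k)))
        = slog1p u n - P (n - 1)" by (simp add: un)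
    show ?thesis unfolding S T using Pk[OF n] by (simp add: algebra_simps)
  qed
  show ?thesis using P0 main by auto
qed

end
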